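(* Let $f$ and $\varepsilon_0$ be as in the context and let $0<\alpha<\beta$. Let $(\mu_n)$ be a sequence of $\mathcal F$-invariant probability measures on $\Omega_{\varepsilon_0}\times M$ converging in the weak* topology to $\mu$, and suppose that for $\mu$-a.e. $(\underline\omega,x)$ $$\lim_{n\to+\infty}\frac1n\log\|Df^{-n}_{\underline\omega}|_{E^{cu}(\underline\omega,x)}\|<-\beta,\qquad \lim_{n\to+\infty}\frac1n\log\|Df^{n}_{\underline\omega}|_{E^{cs}(\underline\omega,x)}\|<-\beta .$$ Then for every $\eta\in(0,1)$ there is $\ell(\eta)\in\mathbb N$ such that for all $\ell\ge\ell(\eta)$, $$\liminf_{n\to+\infty}\mu_n(K_\ell(\beta))>1-\eta .$$
   Context: $M$ compact Riemannian manifold, $f$ a $C^2$ diffeomorphism with dominated splitting $TM=E^{cu}\oplus_{\succ}E^{cs}$, with a regular random perturbation (continuous $\omega\mapsto f_\omega\in\mathrm{Diff}^2(M)$ on a metric space $\mathcal T$, $f_{\omega_f}=f$, probabilities $\theta_\varepsilon$ on $\mathcal T$ with nested compact supports shrinking to $\{\omega_f\}$ and absolutely continuous transition probabilities). $\Omega_\varepsilon=\mathrm{supp}(\theta_\varepsilon^{\mathbb Z})$; $\mathcal F(\underline\omega,x)=(\sigma\underline\omega,f_{\omega_0}(x))$, $\sigma$ the left shift; $f^n_{\underline\omega}=f_{\omega_{n-1}}\circ\cdots\circ f_{\omega_0}$ ($n>0$), $f^{n}_{\underline\omega}=f_{\omega_n}^{-1}\circ\cdots\circ f_{\omega_{-1}}^{-1}$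 ($n<0$), derivatives taken at $x$. There is $\varepsilon_0>0$ and a continuous $\mathcal F$-invariant splitting $T_xM=E^{cu}(\underline\omega,x)\oplus E^{cs}(\underline\omega,x)$ on $\Omega_{\varepsilon_0}\times M$. For $\ell\in\mathbb N$ and $\beta>0$, $K_\ell(\beta)$ is the (closed) set of $(\underline\omega,x)\in\Omega_{\varepsilon_0}\times M$ with $\|Df^{\ell}_{\underline\omega}|_{E^{cs}(\underline\omega,x)}\|\le e^{-\beta\ell}$ and $\|Df^{-\ell}_{\underline\omega}|_{E^{cu}(\underline\omega,x)}\|\le e^{-\beta\ell}$. *)

theory Defs
  imports "HOL-Analysis.Analysis" "HOL-Probability.Probability"
begin

definition rnorm :: "('a::real_normed_vector \<Rightarrow> 'b::real_normed_vector) \<Rightarrow> 'a set \<Rightarrow> real" where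
  "rnorm L E = (if E \<subseteq> {0} then 0 else Sup ((\<lambda>v. norm (L v)) ` {v \<in> E. norm v = 1}))"

definition direct_sum :: "'a::real_vector set \<Rightarrow> 'a set \<Rightarrow> 'a set \<Rightarrow> bool" where
  "direct_sum T E F \<longleftrightarrow> subspace E \<and> subspace F \<and> E \<inter> F = {0} \<and>
     {u + v | u v. u \<in> E \<and> v \<in> F} = T"

text \<open>Orthogonal projection onto a subspace (used to express continuity of subspace fields).\<close>
definition oproj :: "'a::euclidean_space set \<Rightarrow> 'a \<Rightarrow> 'a" where
  "oproj E v = (THE w. w \<in> E \<and> (\<forall>u\<in>E. (v - w) \<bullet> u = 0))"

definition C2_on :: "'d::euclidean_space set \<Rightarrow> ('d \<Rightarrow> 'a::euclidean_space) \<Rightarrow> bool" where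
  "C2_on U g \<longleftrightarrow> (\<exists>(Dg :: 'd \<Rightarrow> ('d \<Rightarrow>\<^sub>L 'a)) (D2g :: 'd \<Rightarrow> ('d \<Rightarrow>\<^sub>L ('d \<Rightarrow>\<^sub>L 'a))).
     (\<forall>u\<in>U. (g has_derivative blinfun_apply (Dg u)) (at u)) \<and>
     (\<forall>u\<in>U. (Dg has_derivative blinfun_apply (D2g u)) (at u)) \<and>
     continuous_on U D2g)"

definition C2_chart :: "'a::euclidean_space set \<Rightarrow> 'd::euclidean_space set \<Rightarrow> ('d \<Rightarrow> 'a) \<Rightarrow> bool" where
  "C2_chart M U \<phi> \<longleftrightarrow> open U \<and> C2_on U \<phi> \<and> inj_on \<phi> U \<and>
     (\<exists>V. open V \<and> \<phi> ` U = M \<inter> V) \<and>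
     continuous_on (\<phi> ` U) (inv_into U \<phi>) \<and>
     (\<forall>u\<in>U. inj (frechet_derivative \<phi> (at u)))"

text \<open>M is an embedded C^2 submanifold of dimension DIM('d).\<close>
definition C2_submanifold :: "'a::euclidean_space set \<Rightarrow> 'd::euclidean_space itself \<Rightarrow> bool" where
  "C2_submanifold M TYPE('d) \<longleftrightarrow>
     (\<forall>x\<in>M. \<exists>(U::'d set) \<phi>. C2_chart M U \<phi> \<and> x \<in> \<phi> ` U)"

definition tspace :: "'a::euclidean_space set \<Rightarrow> 'a \<Rightarrow> 'a set" where
  "tspace M x = {v. \<exists>\<gamma>. (\<forall>t. \<gamma> t \<in> M) \<and> \<gamma> 0 = x \<and> (\<gamma> has_vector_derivative v) (at 0)}"

text \<open>Null sets of the Riemannian volume of M (read in the charts).\<close>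
definition M_null :: "'a::euclidean_space set \<Rightarrow> 'd::euclidean_space itself \<Rightarrow> 'a set \<Rightarrow> bool" where
  "M_null M TYPE('d) A \<longleftrightarrow> (\<forall>(U::'d set) \<phi>. C2_chart M U \<phi> \<longrightarrow> negligible (U \<inter> \<phi> -` A))"

text \<open>fam \<omega> = f_\<omega> and finv \<omega> = f_\<omega>^{-1}, given as C^2 maps on a neighbourhood of M.\<close>
primrec fpos :: "('w \<Rightarrow> 'a \<Rightarrow> 'a) \<Rightarrow> (int \<Rightarrow> 'w) \<Rightarrow> nat \<Rightarrow> 'a \<Rightarrow> 'a" where
  "fpos fam \<omega> 0 = id"
| "fpos fam \<omega> (Suc n) = fam (\<omega> (int n)) \<circ> fpos fam \<omega> n"

primrec fneg :: "('w \<Rightarrow> 'a \<Rightarrow> 'a) \<Rightarrow> (int \<Rightarrow> 'w) \<Rightarrow> nat \<Rightarrow> 'a \<Rightarrow> 'a" where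
  "fneg finv \<omega> 0 = id"
| "fneg finv \<omega> (Suc n) = finv (\<omega> (- int n - 1)) \<circ> fneg finv \<omega> n"

definition fiter :: "('w \<Rightarrow> 'a \<Rightarrow> 'a) \<Rightarrow> ('w \<Rightarrow> 'a \<Rightarrow> 'a) \<Rightarrow> (int \<Rightarrow> 'w) \<Rightarrow> int \<Rightarrow> 'a \<Rightarrow> 'a" where
  "fiter fam finv \<omega> n = (if n \<ge> 0 then fpos fam \<omega> (nat n) else fneg finv \<omega> (nat (- n)))"

definition Dfiter :: "('w \<Rightarrow> 'a::euclidean_space \<Rightarrow> 'a) \<Rightarrow> ('w \<Rightarrow> 'a \<Rightarrow> 'a) \<Rightarrow> (int \<Rightarrow> 'w) \<Rightarrow> int \<Rightarrow> 'a \<Rightarrow> 'a \<Rightarrow> 'a" where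
  "Dfiter fam finv \<omega> n x = frechet_derivative (fiter fam finv \<omega> n) (at x)"

definition shift :: "(int \<Rightarrow> 'w) \<Rightarrow> (int \<Rightarrow> 'w)" where
  "shift \<omega> = (\<lambda>k. \<omega> (k + 1))"

definition skewF :: "('w \<Rightarrow> 'a \<Rightarrow> 'a) \<Rightarrow> (int \<Rightarrow> 'w) \<times> 'a \<Rightarrow> (int \<Rightarrow> 'w) \<times> 'a" where
  "skewF fam p = (shift (fst p), fam (fst p 0) (snd p))"

text \<open>Topological support of a measure (inner-measure form, so that it also makes sense
  when open sets need not be measurable; agrees with the usual support on Borel measures).\<close>
definition msupp :: "'b::topological_space measure \<Rightarrow> 'b set" where
  "msupp N = {x. \<forall>U. open U \<and> x \<in> U \<longrightarrow> (\<exists>B\<in>sets N. B \<subseteq> U \<and> emeasure N B > 0)}"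

definition Omega :: "(real \<Rightarrow> 'w::topological_space measure) \<Rightarrow> real \<Rightarrow> (int \<Rightarrow> 'w) set" where
  "Omega \<theta> \<epsilon> = msupp (PiM (UNIV :: int set) (\<lambda>_. \<theta> \<epsilon>))"

definition weak_star_conv :: "'b::topological_space set \<Rightarrow> (nat \<Rightarrow> 'b measure) \<Rightarrow> 'b measure \<Rightarrow> bool" where
  "weak_star_conv S \<mu>s \<mu> \<longleftrightarrow>
     (\<forall>g :: 'b \<Rightarrow> real. continuous_on S g \<longrightarrow>
        (\<lambda>n. (LINT p:S|\<mu>s n. g p)) \<longlonglongrightarrow> (LINT p:S|\<mu>. g p))"

definition prob_on :: "'b::topological_space set \<Rightarrow> 'b measure \<Rightarrow> bool" where
  "prob_on S N \<longleftrightarrow> prob_space N \<and> sets N = sets borel \<and> emeasure N S = 1"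

definition invariant_on :: "'b::topological_space set \<Rightarrow> ('b \<Rightarrow> 'b) \<Rightarrow> 'b measure \<Rightarrow> bool" where
  "invariant_on S T N \<longleftrightarrow> (\<forall>A\<in>sets borel. emeasure N (T -` A \<inter> S) = emeasure N A)"

text \<open>The family \<omega> \<mapsto> f_\<omega> (with inverses) is continuous into Diff^2(M): there are C^2
  extensions to a neighbourhood of M whose derivatives up to order 2 depend jointly
  continuously on (\<omega>, x).\<close>
definition C2_family :: "'a::euclidean_space set \<Rightarrow> ('w::topological_space \<Rightarrow> 'a \<Rightarrow> 'a) \<Rightarrow> bool" where
  "C2_family U g \<longleftrightarrow> (\<exists>(Dg :: 'w \<Rightarrow> 'a \<Rightarrow> ('a \<Rightarrow>\<^sub>L 'a)) (D2g :: 'w \<Rightarrow> 'a \<Rightarrow> ('a \<Rightarrow>\<^sub>L ('a \<Rightarrow>\<^sub>L 'a))).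
     (\<forall>\<omega>. \<forall>x\<in>U. (g \<omega> has_derivative blinfun_apply (Dg \<omega> x)) (at x)) \<and>
     (\<forall>\<omega>. \<forall>x\<in>U. (Dg \<omega> has_derivative blinfun_apply (D2g \<omega> x)) (at x)) \<and>
     continuous_on (UNIV \<times> U) (\<lambda>(\<omega>, x). g \<omega> x) \<and>
     continuous_on (UNIV \<times> U) (\<lambda>(\<omega>, x). Dg \<omega> x) \<and>
     continuous_on (UNIV \<times> U) (\<lambda>(\<omega>, x). D2g \<omega> x))"

definition diff2_family :: "'a::euclidean_space set \<Rightarrow> ('w::topological_space \<Rightarrow> 'a \<Rightarrow> 'a) \<Rightarrow> ('w \<Rightarrow> 'a \<Rightarrow> 'a) \<Rightarrow> bool" where
  "diff2_family M fam finv \<longleftrightarrow>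
     (\<exists>U. open U \<and> M \<subseteq> U \<and> C2_family U fam \<and> C2_family U finv) \<and>
     (\<forall>\<omega>. \<forall>x\<in>M. fam \<omega> x \<in> M \<and> finv \<omega> x \<in> M \<and> finv \<omega> (fam \<omega> x) = x \<and> fam \<omega> (finv \<omega> x) = x)"

definition dominated_splitting :: "'a::euclidean_space set \<Rightarrow> ('w \<Rightarrow> 'a \<Rightarrow> 'a) \<Rightarrow> ('w \<Rightarrow> 'a \<Rightarrow> 'a) \<Rightarrow> 'w
     \<Rightarrow> ('a \<Rightarrow> 'a set) \<Rightarrow> ('a \<Rightarrow> 'a set) \<Rightarrow> bool" where
  "dominated_splitting M fam finv \<omega>f Ecu Ecs \<longleftrightarrow>
     (\<forall>x\<in>M. direct_sum (tspace M x) (Ecu x) (Ecs x) \<and> Ecu x \<noteq> {0} \<and> Ecs x \<noteq> {0} \<and>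
        frechet_derivative (fam \<omega>f) (at x) ` Ecu x = Ecu (fam \<omega>f x) \<and>
        frechet_derivative (fam \<omega>f) (at x) ` Ecs x = Ecs (fam \<omega>f x)) \<and>
     (\<exists>C>0. \<exists>r. 0 < r \<and> r < 1 \<and> (\<forall>x\<in>M. \<forall>n::nat.
        rnorm (Dfiter fam finv (\<lambda>_. \<omega>f) (int n) x) (Ecs x) *
        rnorm (Dfiter fam finv (\<lambda>_. \<omega>f) (- int n) (fiter fam finv (\<lambda>_. \<omega>f) (int n) x))
              (Ecu (fiter fam finv (\<lambda>_. \<omega>f) (int n) x))
        \<le> C * r ^ n))"

text \<open>Regular random perturbation of f = f_{\<omega>_f}; the parameter space \<T> is the whole type 'w.\<close>
definition regular_random_perturbation :: "'a::euclidean_space set \<Rightarrow> 'd::euclidean_space itself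
     \<Rightarrow> ('w::metric_space \<Rightarrow> 'a \<Rightarrow> 'a) \<Rightarrow> ('w \<Rightarrow> 'a \<Rightarrow> 'a) \<Rightarrow> 'w \<Rightarrow> (real \<Rightarrow> 'w measure) \<Rightarrow> bool" where
  "regular_random_perturbation M TYPE('d) fam finv \<omega>f \<theta> \<longleftrightarrow>
     diff2_family M fam finv \<and>
     (\<forall>\<epsilon>>0. prob_space (\<theta> \<epsilon>) \<and> sets (\<theta> \<epsilon>) = sets borel \<and> compact (msupp (\<theta> \<epsilon>))) \<and>
     (\<forall>\<epsilon> \<epsilon>'. 0 < \<epsilon> \<and> \<epsilon> \<le> \<epsilon>' \<longrightarrow> msupp (\<theta> \<epsilon>) \<subseteq> msupp (\<theta> \<epsilon>')) \<and>
     (\<Inter>\<epsilon>\<in>{0<..}. msupp (\<theta> \<epsilon>)) = {\<omega>f} \<and>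
     (\<forall>\<epsilon>>0. \<forall>x\<in>M. \<forall>A\<in>sets borel. A \<subseteq> M \<longrightarrow> M_null M TYPE('d) A \<longrightarrow>
        emeasure (\<theta> \<epsilon>) {\<omega>. fam \<omega> x \<in> A} = 0)"

definition random_splitting :: "'a::euclidean_space set \<Rightarrow> ('w::topological_space \<Rightarrow> 'a \<Rightarrow> 'a) \<Rightarrow> (int \<Rightarrow> 'w) set
     \<Rightarrow> ((int \<Rightarrow> 'w) \<Rightarrow> 'a \<Rightarrow> 'a set) \<Rightarrow> ((int \<Rightarrow> 'w) \<Rightarrow> 'a \<Rightarrow> 'a set) \<Rightarrow> bool" where
  "random_splitting M fam \<Omega> Ecu Ecs \<longleftrightarrow>
     (\<forall>\<omega>\<in>\<Omega>. \<forall>x\<in>M. direct_sum (tspace M x) (Ecu \<omega> x) (Ecs \<omega> x) \<and>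
        frechet_derivative (fam (\<omega> 0)) (at x) ` Ecu \<omega> x = Ecu (shift \<omega>) (fam (\<omega> 0) x) \<and>
        frechet_derivative (fam (\<omega> 0)) (at x) ` Ecs \<omega> x = Ecs (shift \<omega>) (fam (\<omega> 0) x)) \<and>
     (\<forall>v. continuous_on (\<Omega> \<times> M) (\<lambda>(\<omega>, x). oproj (Ecu \<omega> x) v) \<and>
          continuous_on (\<Omega> \<times> M) (\<lambda>(\<omega>, x). oproj (Ecs \<omega> x) v))"

definition Kset :: "'a::euclidean_space set \<Rightarrow> ('w \<Rightarrow> 'a \<Rightarrow> 'a) \<Rightarrow> ('w \<Rightarrow> 'a \<Rightarrow> 'a) \<Rightarrow> (int \<Rightarrow> 'w) set
     \<Rightarrow> ((int \<Rightarrow> 'w) \<Rightarrow> 'a \<Rightarrow> 'a set) \<Rightarrow> ((int \<Rightarrow> 'w) \<Rightarrow> 'a \<Rightarrow> 'a set) \<Rightarrow> nat \<Rightarrow> real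
     \<Rightarrow> ((int \<Rightarrow> 'w) \<times> 'a) set" where
  "Kset M fam finv \<Omega> Ecu Ecs l \<beta> = {(\<omega>, x). \<omega> \<in> \<Omega> \<and> x \<in> M \<and>
     rnorm (Dfiter fam finv \<omega> (int l) x) (Ecs \<omega> x) \<le> exp (- \<beta> * real l) \<and>
     rnorm (Dfiter fam finv \<omega> (- int l) x) (Ecu \<omega> x) \<le> exp (- \<beta> * real l)}"

end

theory Submission
  imports Defs
begin


lemma oproj_unique:
  fixes E :: "'a::euclidean_space set"
  assumes E: "subspace E" and w: "w \<in> E" "\<forall>u\<in>E. (v - w) \<bullet> u = 0"
  shows "oproj E v = w"
proof -
  have uniq: "w1 = w2" if "w1 \<in> E" "\<forall>u\<in>E. (v - w1) \<bullet> u = 0" "w2 \<in> E" "\<forall>u\<in>E. (v - w2) \<bullet> u = 0" for w1 w2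
  proof -
    have d: "w2 - w1 \<in> E" using that E by (simp add: subspace_diff)
    have "(v - w1) \<bullet> (w2 - w1) = 0" "(v - w2) \<bullet> (w2 - w1) = 0" using that d by auto
    then have "(w2 - w1) \<bullet> (w2 - w1) = 0" by (simp add: inner_diff_left)
    then show ?thesis by simp
  qed
  show ?thesis unfolding oproj_def
    by (rule the_equality) (use w uniq in auto)
qed

lemma oproj_exists:
  fixes E :: "'a::euclidean_space set"
  assumes E: "subspace E"
  shows "oproj E v \<in> E \<and> (\<forall>u\<in>E. (v - oproj E v) \<bullet> u = 0)"
proof -
  obtain y z where y: "y \<in> span E" and z: "\<And>w. w \<in> span E \<Longrightarrow> orthogonal z w" and v: "v = y + z"
    using orthogonal_subspace_decomp_exists by blast
  have sp: "span E = E" using E by (simp add: span_eq_iff)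
  have "y \<in> E" "\<forall>u\<in>E. (v - y) \<bullet> u = 0" using y z v sp by (auto simp: orthogonal_def)
  then show ?thesis using oproj_unique[OF E] by metis
qed

lemma oproj_in: "subspace E \<Longrightarrow> oproj E v \<in> E"
  using oproj_exists by blast

lemma oproj_orth: "subspace E \<Longrightarrow> u \<in> E \<Longrightarrow> (v - oproj E v) \<bullet> u = 0"
  using oproj_exists by blast

lemma oproj_id: "subspace (E::'a::euclidean_space set) \<Longrightarrow> v \<in> E \<Longrightarrow> oproj E v = v"
  by (rule oproj_unique) auto

lemma oproj_linear:
  fixes E :: "'a::euclidean_space set"
  assumes E: "subspace E"
  shows "linear (oproj E)"
proof (rule linearI)
  fix x y
  have ox: "x \<bullet> u = oproj E x \<bullet> u" and oy: "y \<bullet> u = oproj E y \<bullet> u" if "u \<in> E" for u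
    using oproj_orth[OF E that, of x] oproj_orth[OF E that, of y] by (auto simp: inner_diff_left)
  show "oproj E (x + y) = oproj E x + oproj E y"
    using E by (intro oproj_unique) (auto simp: subspace_add oproj_in inner_diff_left inner_add_left ox oy)
next
  fix c and x :: 'a
  have ox: "x \<bullet> u = oproj E x \<bullet> u" if "u \<in> E" for u
    using oproj_orth[OF E that, of x] by (auto simp: inner_diff_left)
  show "oproj E (c *\<^sub>R x) = c *\<^sub>R oproj E x"
    using E by (intro oproj_unique) (auto simp: subspace_scale oproj_in inner_diff_left ox)
qed

lemma oproj_norm:
  fixes E :: "'a::euclidean_space set"
  assumes E: "subspace E"
  shows "norm (oproj E v) \<le> norm v"
proof -
  let ?p = "oproj E v"
  have o: "(v - ?p) \<bullet> ?p = 0" using oproj_orth[OF E oproj_in[OF E]] .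
  have "v = ?p + (v - ?p)" by simp
  then have "(norm v)\<^sup>2 = (norm ?p)\<^sup>2 + (norm (v - ?p))\<^sup>2"
    by (metis o inner_commute norm_add_Pythagorean orthogonal_def)
  then have "(norm ?p)\<^sup>2 \<le> (norm v)\<^sup>2" by simp
  then show ?thesis by (simp add: power_mono_iff)
qed



lemma rnorm_eq_onorm:
  fixes L :: "'a::euclidean_space \<Rightarrow> 'b::real_normed_vector"
  assumes L: "bounded_linear L" and E: "subspace E"
  shows "rnorm L E = onorm (\<lambda>v. L (oproj E v))"
proof -
  have blP: "bounded_linear (oproj E)"
    using oproj_linear[OF E] by (simp add: linear_conv_bounded_linear)
  have blLP: "bounded_linear (\<lambda>v. L (oproj E v))"
    using bounded_linear_compose[OF L blP] .
  show ?thesis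
  proof (cases "E \<subseteq> {0}")
    case True
    then have "\<And>v. oproj E v = 0" using oproj_in[OF E] by blast
    then have "(\<lambda>v. L (oproj E v)) = (\<lambda>v. 0)" using L by (simp add: linear_simps)
    then show ?thesis using True by (simp add: rnorm_def onorm_zero)
  next
    case False
    then obtain e where e: "e \<in> E" "e \<noteq> 0" by blast
    let ?A = "(\<lambda>v. norm (L v)) ` {v \<in> E. norm v = 1}"
    have ne: "?A \<noteq> {}"
    proof -
      have "e /\<^sub>R norm e \<in> {v \<in> E. norm v = 1}" using e E by (simp add: subspace_scale)
      then show ?thesis by blast
    qed
    have bdd: "bdd_above ?A"
    proof (rule bdd_aboveI[of _ "onorm L"])
      fix a assume "a \<in> ?A"
      then obtain v where "v \<in> E" "norm v = 1" "a = norm (L v)" by auto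
      then show "a \<le> onorm L" using onorm[OF L, of v] by simp
    qed
    have r: "rnorm L E = Sup ?A" using False by (simp add: rnorm_def)
    have Sge0: "0 \<le> Sup ?A"
    proof -
      obtain a where a: "a \<in> ?A" using ne by blast
      have "0 \<le> a" using a by auto
      also have "a \<le> Sup ?A" using cSup_upper[OF a bdd] .
      finally show ?thesis .
    qed
    have le1: "Sup ?A \<le> onorm (\<lambda>v. L (oproj E v))"
    proof (rule cSup_least[OF ne])
      fix a assume "a \<in> ?A"
      then obtain v where v: "v \<in> E" "norm v = 1" "a = norm (L v)" by auto
      have "a = norm (L (oproj E v))" using v oproj_id[OF E] by simp
      also have "\<dots> \<le> onorm (\<lambda>v. L (oproj E v)) * norm v" using onorm[OF blLP] .
      finally show "a \<le> onorm (\<lambda>v. L (oproj E v))" using v by simp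
    qed
    have le2: "onorm (\<lambda>v. L (oproj E v)) \<le> Sup ?A"
    proof (rule onorm_le)
      fix x
      show "norm (L (oproj E x)) \<le> Sup ?A * norm x"
      proof (cases "oproj E x = 0")
        case True then show ?thesis using L Sge0 by (simp add: linear_simps)
      next
        case False
        let ?p = "oproj E x"
        let ?v = "?p /\<^sub>R norm ?p"
        have vE: "?v \<in> E" using oproj_in[OF E] E by (simp add: subspace_scale)
        have vn: "norm ?v = 1" using False by simp
        have "norm (L ?v) \<le> Sup ?A" using vE vn bdd by (intro cSup_upper) auto
        moreover have "L ?p = norm ?p *\<^sub>R L ?v" using L False by (simp add: linear_simps)
        ultimately have "norm (L ?p) \<le> norm ?p * Sup ?A"
          by (simp add: mult_left_mono)
        also have "\<dots> \<le> norm x * Sup ?A" using oproj_norm[OF E] Sge0 by (simp add: mult_right_mono)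
        finally show ?thesis by (simp add: mult.commute)
      qed
    qed
    show ?thesis using r le1 le2 by simp
  qed
qed



lemma rnorm_continuous_on:
  fixes D :: "'p::t2_space \<Rightarrow> ('a::euclidean_space \<Rightarrow>\<^sub>L 'a)"
  assumes D: "continuous_on S D" and E: "\<And>p. p \<in> S \<Longrightarrow> subspace (E p)"
    and P: "\<And>v. continuous_on S (\<lambda>p. oproj (E p) v)"
  shows "continuous_on S (\<lambda>p. rnorm (blinfun_apply (D p)) (E p))"
proof -
  define B where "B p = Blinfun (\<lambda>v. D p (oproj (E p) v))" for p
  have bl: "bounded_linear (\<lambda>v. D p (oproj (E p) v))" if "p \<in> S" for p
    using bounded_linear_compose[OF blinfun.bounded_linear_right, of "oproj (E p)" "D p"]
      oproj_linear[OF E[OF that]] by (simp add: linear_conv_bounded_linear)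
  have Bapp: "blinfun_apply (B p) v = D p (oproj (E p) v)" if "p \<in> S" for p v
    unfolding B_def using bl[OF that] by (simp add: bounded_linear_Blinfun_apply)
  have eq: "rnorm (blinfun_apply (D p)) (E p) = norm (B p)" if "p \<in> S" for p
  proof -
    have "rnorm (blinfun_apply (D p)) (E p) = onorm (\<lambda>v. D p (oproj (E p) v))"
      by (rule rnorm_eq_onorm[OF blinfun.bounded_linear_right E[OF that]])
    also have "(\<lambda>v. D p (oproj (E p) v)) = blinfun_apply (B p)"
      by (rule ext) (simp add: Bapp[OF that])
    finally show ?thesis by (simp add: norm_blinfun.rep_eq)
  qed
  have cB: "continuous_on S B"
  proof (rule continuous_on_blinfun_componentwise)
    fix i :: 'a
    have "continuous_on S (\<lambda>p. blinfun_apply (D p) (oproj (E p) i))"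
      by (intro continuous_intros D P)
    then show "continuous_on S (\<lambda>p. blinfun_apply (B p) i)"
      by (rule continuous_on_eq) (auto simp: Bapp)
  qed
  have "continuous_on S (\<lambda>p. norm (B p))" by (intro continuous_intros cB)
  then show ?thesis by (rule continuous_on_eq) (auto simp: eq)
qed



primrec rcomp :: "('w \<Rightarrow> 'a \<Rightarrow> 'a) \<Rightarrow> (nat \<Rightarrow> int) \<Rightarrow> (int \<Rightarrow> 'w) \<Rightarrow> nat \<Rightarrow> 'a \<Rightarrow> 'a" where
  "rcomp g idx \<omega> 0 = id"
| "rcomp g idx \<omega> (Suc n) = g (\<omega> (idx n)) \<circ> rcomp g idx \<omega> n"

primrec Dcomp :: "('w \<Rightarrow> 'a \<Rightarrow> ('a::real_normed_vector \<Rightarrow>\<^sub>L 'a)) \<Rightarrow> ('w \<Rightarrow> 'a \<Rightarrow> 'a) \<Rightarrow> (nat \<Rightarrow> int)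
    \<Rightarrow> (int \<Rightarrow> 'w) \<Rightarrow> nat \<Rightarrow> 'a \<Rightarrow> ('a \<Rightarrow>\<^sub>L 'a)" where
  "Dcomp Dg g idx \<omega> 0 x = id_blinfun"
| "Dcomp Dg g idx \<omega> (Suc n) x = Dg (\<omega> (idx n)) (rcomp g idx \<omega> n x) o\<^sub>L Dcomp Dg g idx \<omega> n x"

lemma fpos_fcomp: "fpos g \<omega> n = rcomp g int \<omega> n"
  by (induction n) auto

lemma fneg_fcomp: "fneg g \<omega> n = rcomp g (\<lambda>n. - int n - 1) \<omega> n"
  by (induction n) auto

lemma fiter_pos: "fiter fam finv \<omega> (int n) = rcomp fam int \<omega> n"
  by (simp add: fiter_def fpos_fcomp)

lemma fiter_neg: "fiter fam finv \<omega> (- int n) = rcomp finv (\<lambda>n. - int n - 1) \<omega> n"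
proof (cases "n = 0")
  case True then show ?thesis by (simp add: fiter_def)
next
  case False then show ?thesis by (simp add: fiter_def fneg_fcomp)
qed

lemma fcomp_in:
  fixes g :: "'w \<Rightarrow> 'a \<Rightarrow> 'a"
  assumes "\<And>w y. y \<in> M \<Longrightarrow> g w y \<in> M" "x \<in> M"
  shows "rcomp g idx \<omega> n x \<in> M"
  using assms by (induction n) auto

lemma fcomp_deriv:
  fixes g :: "'w \<Rightarrow> 'a::real_normed_vector \<Rightarrow> 'a"
  assumes inv: "\<And>w y. y \<in> M \<Longrightarrow> g w y \<in> M" and MU: "M \<subseteq> U"
    and d: "\<And>\<omega> x. x \<in> U \<Longrightarrow> (g \<omega> has_derivative blinfun_apply (Dg \<omega> x)) (at x)"
    and x: "x \<in> M"
  shows "(rcomp g idx \<omega> n has_derivative blinfun_apply (Dcomp Dg g idx \<omega> n x)) (at x)"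
proof (induction n)
  case 0
  then show ?case by (simp add: id_def)
next
  case (Suc n)
  have "rcomp g idx \<omega> n x \<in> U" using fcomp_in[where g=g, OF inv x] MU by blast
  from diff_chain_at[OF Suc d[OF this]]
  show ?case by (simp add: comp_def blinfun_apply_blinfun_compose[abs_def])
qed

lemma coord_cont: "continuous_on A (\<lambda>p. fst p i :: 'b::topological_space)"
  by (rule continuous_on_compose2[OF continuous_on_product_coordinates continuous_on_fst]) auto

lemma fcomp_cont:
  fixes g :: "'w::topological_space \<Rightarrow> 'a::real_normed_vector \<Rightarrow> 'a"
  assumes inv: "\<And>w y. y \<in> M \<Longrightarrow> g w y \<in> M" and MU: "M \<subseteq> U"
    and cg: "continuous_on (UNIV \<times> U) (\<lambda>(\<omega>, x). g \<omega> x)"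
  shows "continuous_on (UNIV \<times> M) (\<lambda>p. rcomp g idx (fst p) n (snd p))"
proof (induction n)
  case 0
  then show ?case by (simp add: continuous_on_snd)
next
  case (Suc n)
  have c1: "continuous_on (UNIV \<times> M) (\<lambda>p. (fst p (idx n), rcomp g idx (fst p) n (snd p)))"
    by (intro continuous_on_Pair coord_cont Suc)
  have "continuous_on (UNIV \<times> M) ((\<lambda>(\<omega>, x). g \<omega> x) \<circ> (\<lambda>p. (fst p (idx n), rcomp g idx (fst p) n (snd p))))"
    by (rule continuous_on_compose[OF c1 continuous_on_subset[OF cg]])
      (use fcomp_in[where g=g, OF inv] MU in auto)
  then show ?case by (simp add: comp_def)
qed

lemma Dcomp_cont:
  fixes g :: "'w::topological_space \<Rightarrow> 'a::real_normed_vector \<Rightarrow> 'a"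
  assumes inv: "\<And>w y. y \<in> M \<Longrightarrow> g w y \<in> M" and MU: "M \<subseteq> U"
    and cg: "continuous_on (UNIV \<times> U) (\<lambda>(\<omega>, x). g \<omega> x)"
    and cD: "continuous_on (UNIV \<times> U) (\<lambda>(\<omega>, x). Dg \<omega> x)"
  shows "continuous_on (UNIV \<times> M) (\<lambda>p. Dcomp Dg g idx (fst p) n (snd p))"
proof (induction n)
  case 0
  then show ?case by simp
next
  case (Suc n)
  have c1: "continuous_on (UNIV \<times> M) (\<lambda>p. (fst p (idx n), rcomp g idx (fst p) n (snd p)))"
    by (intro continuous_on_Pair coord_cont fcomp_cont[OF inv MU cg])
  have "continuous_on (UNIV \<times> M) ((\<lambda>(\<omega>, x). Dg \<omega> x) \<circ> (\<lambda>p. (fst p (idx n), rcomp g idx (fst p) n (snd p))))"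
    by (rule continuous_on_compose[OF c1 continuous_on_subset[OF cD]])
      (use fcomp_in[where g=g, OF inv] MU in auto)
  then have "continuous_on (UNIV \<times> M) (\<lambda>p. Dg (fst p (idx n)) (rcomp g idx (fst p) n (snd p)))"
    by (simp add: comp_def)
  then show ?case by (simp, intro continuous_intros Suc)
qed



lemma prob_on_facts:
  assumes "prob_on S N"
  shows "S \<in> sets N" "finite_measure N" "measure N S = 1" "sets N = sets borel"
    "\<And>W. open W \<Longrightarrow> S \<inter> W \<in> sets N"
proof -
  have ps: "prob_space N" and sb: "sets N = sets borel" and e: "emeasure N S = 1"
    using assms by (auto simp: prob_on_def)
  show S: "S \<in> sets N" using e emeasure_notin_sets by fastforce
  show "finite_measure N" using ps by (simp add: prob_space_def)
  show "measure N S = 1" using e by (simp add: measure_def)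
  show "sets N = sets borel" by fact
  show "S \<inter> W \<in> sets N" if "open W" for W
    using S sb that by (auto intro!: sets.Int)
qed

lemma portmanteau_open:
  fixes \<mu>s :: "nat \<Rightarrow> 'b::metric_space measure"
  assumes mun: "\<And>n. prob_on S (\<mu>s n)" and mu: "prob_on S \<mu>"
    and conv: "weak_star_conv S \<mu>s \<mu>" and W: "open W" and c: "measure \<mu> (S \<inter> W) > c"
  shows "ereal c < liminf (\<lambda>n. ereal (measure (\<mu>s n) (S \<inter> W)))"
proof (cases "W = UNIV")
  case True
  then have "(\<lambda>n. ereal (measure (\<mu>s n) (S \<inter> W))) = (\<lambda>n. 1)"
    using prob_on_facts(3)[OF mun] by (simp add: one_ereal_def)
  then show ?thesis using c prob_on_facts(3)[OF mu] True by (simp add: one_ereal_def Liminf_const)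
next
  case False
  define F where "F = - W"
  have Fc: "closed F" and Fne: "F \<noteq> {}" using W False by (auto simp: F_def)
  define g where "g k p = min 1 (real k * infdist p F)" for k p
  have gc: "continuous_on UNIV (g k)" for k unfolding g_def by (intro continuous_intros)
  have gm: "g k \<in> borel_measurable N" if "sets N = sets borel" for N k
    using borel_measurable_continuous_onI[OF gc] measurable_cong_sets[OF that refl] by blast
  have g01: "0 \<le> g k p" "g k p \<le> 1" for k p by (auto simp: g_def infdist_nonneg)
  have gW: "g k p = 0" if "p \<notin> W" for k p using that by (simp add: g_def F_def)
  define I where "I N k = (LINT p:S|N. g k p)" for N k
  have intb: "integrable N (\<lambda>p. indicator S p *\<^sub>R g k p)" if "prob_on S N" for N k
  proof -
    note f = prob_on_facts[OF that]
    show ?thesis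
      by (rule finite_measure.integrable_const_bound[OF f(2), where B=1])
         (use g01 f(1) gm[OF f(4)] in \<open>auto simp: indicator_def\<close>)
  qed
  have Ile: "I (\<mu>s n) k \<le> measure (\<mu>s n) (S \<inter> W)" for n k
  proof -
    note f = prob_on_facts[OF mun[of n]]
    have ii: "integrable (\<mu>s n) (indicator (S \<inter> W) :: _ \<Rightarrow> real)"
      by (rule integrable_real_indicator[OF f(5)[OF W]])
         (simp add: finite_measure.emeasure_finite[OF f(2)] less_top[symmetric])
    have "I (\<mu>s n) k \<le> integral\<^sup>L (\<mu>s n) (indicator (S \<inter> W))"
      unfolding I_def set_lebesgue_integral_def
      by (rule integral_mono[OF intb[OF mun]])
         (use ii g01 gW in \<open>auto simp: indicator_def\<close>)
    also have "\<dots> = measure (\<mu>s n) (S \<inter> W)"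
      using f(5)[OF W] by (simp add: integral_indicator Int_absorb2 sets.sets_into_space Int_commute)
    finally show ?thesis .
  qed
  have Iconv: "(\<lambda>n. I (\<mu>s n) k) \<longlonglongrightarrow> I \<mu> k" for k
    using conv gc unfolding weak_star_conv_def I_def by (meson continuous_on_subset subset_UNIV)
  have Ilim: "(\<lambda>k. I \<mu> k) \<longlonglongrightarrow> measure \<mu> (S \<inter> W)"
  proof -
    note f = prob_on_facts[OF mu]
    have "(\<lambda>k. integral\<^sup>L \<mu> (\<lambda>p. indicator S p *\<^sub>R g k p)) \<longlonglongrightarrow> integral\<^sup>L \<mu> (indicator (S \<inter> W))"
    proof (rule integral_dominated_convergence[where w="\<lambda>_. 1"])
      show "indicat_real (S \<inter> W) \<in> borel_measurable \<mu>" using f(5)[OF W] by simp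
      show "(\<lambda>p. indicator S p *\<^sub>R g k p) \<in> borel_measurable \<mu>" for k
        using f(1) gm[OF f(4)] by measurable
      show "integrable \<mu> (\<lambda>_. 1::real)" using f(2) by (simp add: finite_measure.integrable_const)
      show "AE p in \<mu>. norm (indicator S p *\<^sub>R g k p) \<le> 1" for k
        using g01 by (auto simp: indicator_def)
      show "AE p in \<mu>. (\<lambda>k. indicator S p *\<^sub>R g k p) \<longlonglongrightarrow> indicator (S \<inter> W) p"
      proof (rule AE_I2)
        fix p
        show "(\<lambda>k. indicator S p *\<^sub>R g k p) \<longlonglongrightarrow> indicator (S \<inter> W) p"
        proof (cases "p \<in> S \<inter> W")
          case True
          then have pos: "0 < infdist p F" using infdist_pos_not_in_closed[OF Fc Fne] by (auto simp: F_def)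
          obtain K :: nat where K: "1 / infdist p F < real K" using reals_Archimedean2 by blast
          have "\<forall>k\<ge>K. indicator S p *\<^sub>R g k p = indicator (S \<inter> W) p"
          proof (intro allI impI)
            fix k assume "k \<ge> K"
            then have "1 / infdist p F < real k" using K by linarith
            then have "1 \<le> real k * infdist p F" using pos by (simp add: field_simps)
            then show "indicator S p *\<^sub>R g k p = indicator (S \<inter> W) p" using True by (simp add: g_def)
          qed
          then show ?thesis by (intro tendsto_eventually) (auto simp: eventually_sequentially)
        next
          case False
          have z: "indicator S p *\<^sub>R g k p = (0::real)" for k
          proof (cases "p \<in> S")
            case True
            then have "p \<notin> W" using False by blast
            then show ?thesis using gW by simp
          qed simp
          have i0: "indicator (S \<inter> W) p = (0::real)" using False by simp
          have e: "(\<lambda>k. indicator S p *\<^sub>R g k p) = (\<lambda>k. 0::real)" by (rule ext) (rule z)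
          show ?thesis by (subst e, subst i0, rule tendsto_const)
        qed
      qed
    qed
    moreover have "integral\<^sup>L \<mu> (indicator (S \<inter> W)) = measure \<mu> (S \<inter> W)"
      using f(5)[OF W] by (simp add: integral_indicator Int_absorb2 sets.sets_into_space Int_commute)
    ultimately show ?thesis unfolding I_def set_lebesgue_integral_def by simp
  qed
  obtain k where k: "I \<mu> k > c"
    using order_tendstoD(1)[OF Ilim c] unfolding eventually_sequentially by blast
  have l1: "liminf (\<lambda>n. ereal (I (\<mu>s n) k)) = ereal (I \<mu> k)"
    by (rule lim_imp_Liminf) (auto intro: Iconv)
  have l2: "liminf (\<lambda>n. ereal (I (\<mu>s n) k)) \<le> liminf (\<lambda>n. ereal (measure (\<mu>s n) (S \<inter> W)))"
    by (rule Liminf_mono) (simp add: Ile)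
  have a: "ereal c < liminf (\<lambda>n. ereal (I (\<mu>s n) k))" unfolding l1 using k by simp
  show ?thesis using order_less_le_trans[OF a l2] .
qed

theorem lemma4p1:
  fixes M :: "'a::euclidean_space set"
    and fam finv :: "'w::metric_space \<Rightarrow> 'a \<Rightarrow> 'a"
    and \<omega>f :: 'w
    and \<theta> :: "real \<Rightarrow> 'w measure"
    and Ecu0 Ecs0 :: "'a \<Rightarrow> 'a set"
    and \<epsilon>0 :: real
    and Ecu Ecs :: "(int \<Rightarrow> 'w) \<Rightarrow> 'a \<Rightarrow> 'a set"
    and \<alpha> \<beta> :: real
    and \<mu>s :: "nat \<Rightarrow> ((int \<Rightarrow> 'w) \<times> 'a) measure"
    and \<mu> :: "((int \<Rightarrow> 'w) \<times> 'a) measure"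
  assumes M_compact: "compact M" and M_ne: "M \<noteq> {}"
    and M_manifold: "C2_submanifold M TYPE('d::euclidean_space)"
    and perturbation: "regular_random_perturbation M TYPE('d) fam finv \<omega>f \<theta>"
    and dominated: "dominated_splitting M fam finv \<omega>f Ecu0 Ecs0"
    and eps0: "\<epsilon>0 > 0"
    and splitting: "random_splitting M fam (Omega \<theta> \<epsilon>0) Ecu Ecs"
    and alpha_beta: "0 < \<alpha>" "\<alpha> < \<beta>"
    and mu_n: "\<And>n. prob_on (Omega \<theta> \<epsilon>0 \<times> M) (\<mu>s n)"
    and mu_n_inv: "\<And>n. invariant_on (Omega \<theta> \<epsilon>0 \<times> M) (skewF fam) (\<mu>s n)"
    and mu: "prob_on (Omega \<theta> \<epsilon>0 \<times> M) \<mu>"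
    and conv: "weak_star_conv (Omega \<theta> \<epsilon>0 \<times> M) \<mu>s \<mu>"
    and exps: "AE p in \<mu>. p \<in> Omega \<theta> \<epsilon>0 \<times> M \<longrightarrow>
        (\<exists>L. ((\<lambda>n. ln (rnorm (Dfiter fam finv (fst p) (- int n) (snd p)) (Ecu (fst p) (snd p))) / real n)
                \<longlonglongrightarrow> L) \<and> L < - \<beta>) \<and>
        (\<exists>L. ((\<lambda>n. ln (rnorm (Dfiter fam finv (fst p) (int n) (snd p)) (Ecs (fst p) (snd p))) / real n)
                \<longlonglongrightarrow> L) \<and> L < - \<beta>)"
  shows "\<forall>eta. 0 < eta \<and> eta < 1 \<longrightarrow> (\<exists>l0::nat. \<forall>l\<ge>l0.
           liminf (\<lambda>n. ereal (measure (\<mu>s n) (Kset M fam finv (Omega \<theta> \<epsilon>0) Ecu Ecs l \<beta>)))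
             > ereal (1 - eta))"
proof (intro allI impI)
  fix eta :: real assume eta: "0 < eta \<and> eta < 1"
  define S where "S = Omega \<theta> \<epsilon>0 \<times> M"
  have d2: "diff2_family M fam finv" using perturbation by (simp add: regular_random_perturbation_def)
  then obtain U where U: "open U" "M \<subseteq> U" "C2_family U fam" "C2_family U finv"
    and maps: "\<And>\<omega> x. x \<in> M \<Longrightarrow> fam \<omega> x \<in> M" "\<And>\<omega> x. x \<in> M \<Longrightarrow> finv \<omega> x \<in> M"
    unfolding diff2_family_def by blast
  obtain Df D2f where Df: "\<And>\<omega> x. x \<in> U \<Longrightarrow> (fam \<omega> has_derivative blinfun_apply (Df \<omega> x)) (at x)"
     "continuous_on (UNIV \<times> U) (\<lambda>(\<omega>, x). fam \<omega> x)"
     "continuous_on (UNIV \<times> U) (\<lambda>(\<omega>, x). Df \<omega> x)"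
    using U(3) unfolding C2_family_def by blast
  obtain Di D2i where Di: "\<And>\<omega> x. x \<in> U \<Longrightarrow> (finv \<omega> has_derivative blinfun_apply (Di \<omega> x)) (at x)"
     "continuous_on (UNIV \<times> U) (\<lambda>(\<omega>, x). finv \<omega> x)"
     "continuous_on (UNIV \<times> U) (\<lambda>(\<omega>, x). Di \<omega> x)"
    using U(4) unfolding C2_family_def by blast
  define idn where "idn = (\<lambda>n::nat. - int n - 1)"
  define h1 where "h1 l p = rnorm (Dfiter fam finv (fst p) (int l) (snd p)) (Ecs (fst p) (snd p))" for l p
  define h2 where "h2 l p = rnorm (Dfiter fam finv (fst p) (- int l) (snd p)) (Ecu (fst p) (snd p))" for l p
  define e where "e l = exp (- \<beta> * real l)" for l
  have Deq1: "Dfiter fam finv \<omega> (int l) x = blinfun_apply (Dcomp Df fam int \<omega> l x)" if "x \<in> M" for \<omega> l x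
    unfolding Dfiter_def fiter_pos
    by (rule frechet_derivative_at[OF fcomp_deriv[where g=fam and Dg=Df and idx=int and \<omega>=\<omega> and n=l, OF maps(1) U(2) Df(1) that], symmetric])
  have Deq2: "Dfiter fam finv \<omega> (- int l) x = blinfun_apply (Dcomp Di finv idn \<omega> l x)" if "x \<in> M" for \<omega> l x
    unfolding Dfiter_def fiter_neg idn_def[symmetric]
    by (rule frechet_derivative_at[OF fcomp_deriv[where g=finv and Dg=Di and idx=idn and \<omega>=\<omega> and n=l, OF maps(2) U(2) Di(1) that], symmetric])
  have sub: "subspace (Ecs (fst p) (snd p))" "subspace (Ecu (fst p) (snd p))" if "p \<in> S" for p
    using splitting that unfolding random_splitting_def direct_sum_def S_def by (auto simp: mem_Times_iff)
  have Pcs: "continuous_on S (\<lambda>p. oproj (Ecs (fst p) (snd p)) v)"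
    and Pcu: "continuous_on S (\<lambda>p. oproj (Ecu (fst p) (snd p)) v)" for v
    using splitting unfolding random_splitting_def S_def by (auto simp: case_prod_unfold)
  have SU: "S \<subseteq> UNIV \<times> M" by (auto simp: S_def)
  have h1c: "continuous_on S (h1 l)" for l
  proof -
    have "continuous_on S (\<lambda>p. rnorm (blinfun_apply (Dcomp Df fam int (fst p) l (snd p))) (Ecs (fst p) (snd p)))"
      by (rule rnorm_continuous_on[OF continuous_on_subset[OF Dcomp_cont[OF maps(1) U(2) Df(2) Df(3)] SU] sub(1) Pcs])
    then show ?thesis
      by (rule continuous_on_eq) (auto simp: h1_def S_def Deq1)
  qed
  have h2c: "continuous_on S (h2 l)" for l
  proof -
    have "continuous_on S (\<lambda>p. rnorm (blinfun_apply (Dcomp Di finv idn (fst p) l (snd p))) (Ecu (fst p) (snd p)))"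
      by (rule rnorm_continuous_on[OF continuous_on_subset[OF Dcomp_cont[OF maps(2) U(2) Di(2) Di(3)] SU] sub(2) Pcu])
    then show ?thesis
      by (rule continuous_on_eq) (auto simp: h2_def S_def Deq2)
  qed
  have hc: "continuous_on S (\<lambda>p. (h1 l p, h2 l p))" for l
    by (intro continuous_on_Pair h1c h2c)
  have Keq: "Kset M fam finv (Omega \<theta> \<epsilon>0) Ecu Ecs l \<beta> = (\<lambda>p. (h1 l p, h2 l p)) -` ({..e l} \<times> {..e l}) \<inter> S" for l
  proof (rule set_eqI)
    fix p :: "(int \<Rightarrow> 'w) \<times> 'a"
    obtain w x where p: "p = (w, x)" by fastforce
    show "p \<in> Kset M fam finv (Omega \<theta> \<epsilon>0) Ecu Ecs l \<beta> \<longleftrightarrow> p \<in> (\<lambda>p. (h1 l p, h2 l p)) -` ({..e l} \<times> {..e l}) \<inter> S"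
      unfolding p Kset_def S_def h1_def h2_def e_def by (simp, blast)
  qed
  have exW: "\<forall>l. \<exists>W. open W \<and> W \<inter> S = (\<lambda>p. (h1 l p, h2 l p)) -` ({..<e l} \<times> {..<e l}) \<inter> S"
  proof
    fix l
    have o: "open ({..<e l} \<times> {..<e l})" by (intro open_Times open_lessThan)
    show "\<exists>W. open W \<and> W \<inter> S = (\<lambda>p. (h1 l p, h2 l p)) -` ({..<e l} \<times> {..<e l}) \<inter> S"
      using hc[of l, unfolded continuous_on_open_invariant, rule_format, OF o] .
  qed
  from choice[OF exW] obtain W where W0: "\<forall>l. open (W l) \<and> W l \<inter> S = (\<lambda>p. (h1 l p, h2 l p)) -` ({..<e l} \<times> {..<e l}) \<inter> S"
    by blast
  have W: "\<And>l. open (W l)" "\<And>l. W l \<inter> S = (\<lambda>p. (h1 l p, h2 l p)) -` ({..<e l} \<times> {..<e l}) \<inter> S"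
    using W0 by auto
  have Kcl: "\<exists>C. closed C \<and> C \<inter> S = Kset M fam finv (Omega \<theta> \<epsilon>0) Ecu Ecs l \<beta>" for l
  proof -
    have c: "closed ({..e l} \<times> {..e l})" by (intro closed_Times closed_atMost)
    show ?thesis unfolding Keq
      using hc[of l, unfolded continuous_on_closed_invariant, rule_format, OF c] .
  qed
  have WK: "S \<inter> W l \<subseteq> Kset M fam finv (Omega \<theta> \<epsilon>0) Ecu Ecs l \<beta>" for l
  proof
    fix p assume "p \<in> S \<inter> W l"
    then have "p \<in> W l \<inter> S" by blast
    then have "p \<in> (\<lambda>p. (h1 l p, h2 l p)) -` ({..<e l} \<times> {..<e l}) \<inter> S" using W(2)[of l] by simp
    then show "p \<in> Kset M fam finv (Omega \<theta> \<epsilon>0) Ecu Ecs l \<beta>" unfolding Keq by auto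
  qed
  have Kmeas: "Kset M fam finv (Omega \<theta> \<epsilon>0) Ecu Ecs l \<beta> \<in> sets (\<mu>s n)" for l n
  proof -
    obtain C where C: "closed C" "C \<inter> S = Kset M fam finv (Omega \<theta> \<epsilon>0) Ecu Ecs l \<beta>" using Kcl by blast
    note f = prob_on_facts[OF mu_n[of n, folded S_def]]
    have "C \<in> sets (\<mu>s n)" using C(1) f(4) by simp
    then show ?thesis using C(2) f(1) by (metis sets.Int)
  qed
  note fm = prob_on_facts[OF mu[folded S_def]]
  define Bs where "Bs L = S \<inter> (\<Inter>l\<in>{L..}. W l)" for L
  have Bs_sets: "Bs L \<in> sets \<mu>" for L
  proof -
    have "(\<Inter>l\<in>{L..}. W l) \<in> sets borel" using W(1) by (intro sets.countable_INT') auto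
    then show ?thesis unfolding Bs_def using fm(1) fm(4) by auto
  qed
  have Bs_inc: "incseq Bs" unfolding incseq_def Bs_def by auto
  have good: "\<exists>L. p \<in> Bs L" if p: "p \<in> S" and
    ex: "(\<exists>L. ((\<lambda>n. ln (h2 n p) / real n) \<longlonglongrightarrow> L) \<and> L < - \<beta>) \<and>
        (\<exists>L. ((\<lambda>n. ln (h1 n p) / real n) \<longlonglongrightarrow> L) \<and> L < - \<beta>)" for p
  proof -
    obtain L1 L2 where L1: "((\<lambda>n. ln (h2 n p) / real n) \<longlonglongrightarrow> L1)" "L1 < - \<beta>"
      and L2: "((\<lambda>n. ln (h1 n p) / real n) \<longlonglongrightarrow> L2)" "L2 < - \<beta>" using ex by blast
    have "eventually (\<lambda>n. ln (h2 n p) / real n < - \<beta> \<and> ln (h1 n p) / real n < - \<beta> \<and> 0 < n) sequentially"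
      by (intro eventually_conj order_tendstoD(2)[OF L1(1) L1(2)] order_tendstoD(2)[OF L2(1) L2(2)] eventually_gt_at_top)
    then obtain N where N: "\<And>n. n \<ge> N \<Longrightarrow> ln (h2 n p) / real n < - \<beta> \<and> ln (h1 n p) / real n < - \<beta> \<and> 0 < n"
      unfolding eventually_sequentially by blast
    have key: "x < e n" if "0 < n" "ln x / real n < - \<beta>" for x n
    proof (cases "x \<le> 0")
      case True then show ?thesis by (simp add: e_def order_le_less_trans)
    next
      case False
      then have "ln x < - \<beta> * real n" using that by (simp add: field_simps)
      then have "exp (ln x) < e n" unfolding e_def by simp
      then show ?thesis using False by simp
    qed
    have "p \<in> W l" if "l \<ge> N" for l
    proof -
      have "h1 l p < e l" "h2 l p < e l" using N[OF that] key by auto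
      then show ?thesis using W(2)[of l] p by blast
    qed
    then show ?thesis using p unfolding Bs_def by blast
  qed
  have AE_S: "AE p in \<mu>. p \<in> S"
    using fm(3) mu unfolding prob_on_def by (auto intro: prob_space.AE_prob_1)
  have AEU: "AE p in \<mu>. (p \<in> (\<Union>L. Bs L)) = (p \<in> S)"
    using exps AE_S
  proof eventually_elim
    case (elim p)
    then show ?case using good[of p] unfolding h1_def h2_def S_def[symmetric] Bs_def by blast
  qed
  have UBs: "(\<Union>L. Bs L) \<in> sets \<mu>" using Bs_sets by blast
  have "measure \<mu> (\<Union>L. Bs L) = 1"
    using measure_eq_AE[OF AEU UBs fm(1)] fm(3) by simp
  with finite_measure.finite_Lim_measure_incseq[OF fm(2) _ Bs_inc] Bs_sets
  have lim1: "(\<lambda>L. measure \<mu> (Bs L)) \<longlonglongrightarrow> 1" by auto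
  have "1 - eta < 1" using eta by simp
  from order_tendstoD(1)[OF lim1 this] obtain L where L: "measure \<mu> (Bs L) > 1 - eta"
    unfolding eventually_sequentially by blast
  show "\<exists>l0::nat. \<forall>l\<ge>l0. liminf (\<lambda>n. ereal (measure (\<mu>s n) (Kset M fam finv (Omega \<theta> \<epsilon>0) Ecu Ecs l \<beta>))) > ereal (1 - eta)"
  proof (intro exI allI impI)
    fix l assume l: "l \<ge> L"
    have "Bs L \<subseteq> S \<inter> W l" using l unfolding Bs_def by auto
    then have "measure \<mu> (Bs L) \<le> measure \<mu> (S \<inter> W l)"
      using finite_measure.finite_measure_mono[OF fm(2)] fm(5)[OF W(1)] by blast
    then have c: "measure \<mu> (S \<inter> W l) > 1 - eta" using L by linarith
    have "ereal (1 - eta) < liminf (\<lambda>n. ereal (measure (\<mu>s n) (S \<inter> W l)))"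
      by (rule portmanteau_open[OF mu_n[folded S_def] mu[folded S_def] conv[folded S_def] W(1) c])
    also have "\<dots> \<le> liminf (\<lambda>n. ereal (measure (\<mu>s n) (Kset M fam finv (Omega \<theta> \<epsilon>0) Ecu Ecs l \<beta>)))"
    proof (rule Liminf_mono, rule always_eventually, rule allI)
      fix n
      show "ereal (measure (\<mu>s n) (S \<inter> W l)) \<le> ereal (measure (\<mu>s n) (Kset M fam finv (Omega \<theta> \<epsilon>0) Ecu Ecs l \<beta>))"
        using finite_measure.finite_measure_mono[OF prob_on_facts(2)[OF mu_n] WK Kmeas] by simp
    qed
    finally show "liminf (\<lambda>n. ereal (measure (\<mu>s n) (Kset M fam finv (Omega \<theta> \<epsilon>0) Ecu Ecs l \<beta>))) > ereal (1 - eta)" .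
  qed
qed

end
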